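(* Let $n\ge 1$ and let $A\in\mathcal{E}_n$ have rank $r$ (as an abelian group). Then there exists a finite set $E$ of mod-linear functions $l:\mathbb{Z}^{2n}\to\mathbb{Z}$ of order $\le r$ such that for all integers $a_1\le b_1,\dots,a_n\le b_n$ the following are equivalent: (i) there exists $(x_1,\dots,x_n)\in A$ with $a_i\le x_i\le b_i$ for all $i=1,\dots,n$; (ii) $0\le l(a_1,b_1,a_2,b_2,\dots,a_n,b_n)$ for every $l\in E$.
   Context: For $v=(v_1,\dots,v_n),w=(w_1,\dots,w_n)\in\mathbb{Z}^n$ write $v\mid w$ if $v_i$ divides $w_i$ for every $i$ with $v_i\neq 0$. For $v\in\mathbb{Q}^n$ with support $S=\{i: v_i\neq 0\}$ of size $s$, define the linear map $L_v:\mathbb{Q}^n\to\mathbb{Q}^{\binom{s}{2}+n-s}$ by $L_v(t_1,\dots,t_n)=\big((\tfrac{t_i}{v_i}-\tfrac{t_j}{v_j})_{i<j,\ i,j\in S},\ (t_k)_{k\notin S}\big)$, where the pairs $(i,j)$ are listed in lexicographic order and then the $t_k$, $k\notin S$, in increasing order of $k$. The class $\mathcal{E}_n$ of subgroups of $\mathbb{Z}^n$ is defined inductively: a nonzero subgroup $A\subseteq\mathbb{Z}^n$ belongs to $\mathcal{E}_n$ iff there is a nonzero $v\in A$ with (1) $v\mid w$ for all $w\in A$, and (2) $L_v(A)=\{0\}$ or $L_v(A)\in\mathcal{E}_{\binom{s}{2}+n-s}$ (where $s$ is the number of nonzero components of $v$; under (1), $L_v(A)\subseteq\mathbb{Z}^{\binom{s}{2}+n-s}$).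 Mod-linear functions $l:\mathbb{Z}^N\to\mathbb{Z}$ of order $\le r$ are defined inductively: those of order $\le 0$ are the coordinate projections $(x_1,\dots,x_N)\mapsto x_i$; for $r>0$, $l$ has order $\le r$ if there are mod-linear functions $l_1,l_2$ of order $\le r-1$ and nonzero integers $m_1,m_2$ with $l(x)=\lfloor l_1(x)/m_1\rfloor-\lceil l_2(x)/m_2\rceil$ for all $x\in\mathbb{Z}^N$. *)

theory Defs
  imports Complex_Main
begin

text \<open>Vectors in Z^n (resp. Q^n) are represented as lists of length n (0-indexed).\<close>

definition zerovec :: "nat \<Rightarrow> 'a::zero list" where
  "zerovec n = replicate n 0"

definition vdvd :: "int list \<Rightarrow> int list \<Rightarrow> bool" where
  "vdvd v w \<longleftrightarrow> (\<forall>i<length v. v ! i \<noteq> 0 \<longrightarrow> v ! i dvd w ! i)"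

definition supp_list :: "int list \<Rightarrow> nat list" where
  "supp_list v = filter (\<lambda>i. v ! i \<noteq> 0) [0..<length v]"

definition Lv :: "int list \<Rightarrow> rat list \<Rightarrow> rat list" where
  "Lv v t =
     map (\<lambda>(i, j). t ! i / of_int (v ! i) - t ! j / of_int (v ! j))
         [(i, j). i \<leftarrow> supp_list v, j \<leftarrow> supp_list v, i < j]
     @ map (\<lambda>k. t ! k) (filter (\<lambda>k. v ! k = 0) [0..<length v])"

definition int_subgroup :: "nat \<Rightarrow> int list set \<Rightarrow> bool" where
  "int_subgroup n A \<longleftrightarrow> (\<forall>x\<in>A. length x = n) \<and> zerovec n \<in> A \<and>
     (\<forall>x\<in>A. \<forall>y\<in>A. map2 (+) x y \<in> A) \<and> (\<forall>x\<in>A. map uminus x \<in> A)"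

inductive inE :: "nat \<Rightarrow> int list set \<Rightarrow> bool" where
  "\<lbrakk> int_subgroup n A; A \<noteq> {zerovec n};
     v \<in> A; v \<noteq> zerovec n;
     \<forall>w\<in>A. vdvd v w;
     s = length (supp_list v); m = (s choose 2) + n - s;
     Lv v ` (map rat_of_int ` A) = {zerovec m} \<or>
       (\<exists>B. inE m B \<and> Lv v ` (map rat_of_int ` A) = map rat_of_int ` B) \<rbrakk>
   \<Longrightarrow> inE n A"

definition lin_indep_Z :: "nat \<Rightarrow> int list list \<Rightarrow> bool" where
  "lin_indep_Z n vs \<longleftrightarrow>
     (\<forall>c :: nat \<Rightarrow> int. (\<forall>k<n. (\<Sum>i<length vs. c i * (vs ! i) ! k) = 0)
        \<longrightarrow> (\<forall>i<length vs. c i = 0))"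

definition has_rank :: "nat \<Rightarrow> int list set \<Rightarrow> nat \<Rightarrow> bool" where
  "has_rank n A r \<longleftrightarrow>
     (\<exists>vs. length vs = r \<and> set vs \<subseteq> A \<and> lin_indep_Z n vs) \<and>
     \<not> (\<exists>vs. length vs = Suc r \<and> set vs \<subseteq> A \<and> lin_indep_Z n vs)"

fun modlin :: "nat \<Rightarrow> nat \<Rightarrow> (int list \<Rightarrow> int) \<Rightarrow> bool" where
  "modlin N 0 l = (\<exists>i<N. \<forall>x. length x = N \<longrightarrow> l x = x ! i)"
| "modlin N (Suc r) l = (\<exists>l1 l2 (m1::int) (m2::int). modlin N r l1 \<and> modlin N r l2 \<and>
      m1 \<noteq> 0 \<and> m2 \<noteq> 0 \<and>
      (\<forall>x. length x = N \<longrightarrow>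
         l x = \<lfloor>rat_of_int (l1 x) / rat_of_int m1\<rfloor> - \<lceil>rat_of_int (l2 x) / rat_of_int m2\<rceil>))"

definition interleave :: "int list \<Rightarrow> int list \<Rightarrow> int list" where
  "interleave a b = concat (map (\<lambda>(x, y). [x, y]) (zip a b))"

end

theory Submission
  imports Defs
begin


declare modlin.simps[simp del]

lemma interleave_Cons: "interleave (x#a) (y#b) = x # y # interleave a b"
  by (simp add: interleave_def)

lemma interleave_len: "length a = length b \<Longrightarrow> length (interleave a b) = 2 * length a"
proof (induction a arbitrary: b)
  case Nil then show ?case by (simp add: interleave_def)
next
  case (Cons x a) then show ?case by (cases b) (auto simp: interleave_Cons)
qed

lemma interleave_nth:
  "length a = length b \<Longrightarrow> i < length a \<Longrightarrow>
     interleave a b ! (2*i) = a ! i \<and> interleave a b ! (2*i+1) = b ! i"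
proof (induction a arbitrary: b i)
  case Nil then show ?case by simp
next
  case (Cons x a)
  then obtain y b' where b: "b = y # b'" by (cases b) auto
  show ?case
  proof (cases i)
    case 0 then show ?thesis by (simp add: b interleave_Cons)
  next
    case (Suc j)
    have "2*i = Suc (Suc (2*j))" "2*i+1 = Suc (Suc (2*j+1))" using Suc by auto
    then show ?thesis using Cons.IH[of b' j] Cons.prems Suc b by (simp add: interleave_Cons)
  qed
qed

definition rep :: "nat \<Rightarrow> nat \<Rightarrow> (int list \<Rightarrow> int) \<Rightarrow> bool" where
  "rep N k f \<longleftrightarrow> (\<exists>G c. c \<noteq> 0 \<and> modlin N k G \<and> (\<forall>z. length z = N \<longrightarrow> G z = c * f z))"

lemma rat_div_cancel:
  assumes "G = c * f" "c \<noteq> 0"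
  shows "rat_of_int G / rat_of_int (c * m) = rat_of_int f / rat_of_int m"
  using assms by (simp add: field_simps)

lemma rep_step:
  assumes "rep N k f1" "rep N k f2" "m1 \<noteq> 0" "m2 \<noteq> 0"
  shows "modlin N (Suc k) (\<lambda>z. \<lfloor>rat_of_int (f1 z) / rat_of_int m1\<rfloor> - \<lceil>rat_of_int (f2 z) / rat_of_int m2\<rceil>)"
proof -
  obtain G1 c1 where 1: "c1 \<noteq> 0" "modlin N k G1" "\<forall>z. length z = N \<longrightarrow> G1 z = c1 * f1 z"
    using assms(1) unfolding rep_def by blast
  obtain G2 c2 where 2: "c2 \<noteq> 0" "modlin N k G2" "\<forall>z. length z = N \<longrightarrow> G2 z = c2 * f2 z"
    using assms(2) unfolding rep_def by blast
  show ?thesis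
    apply (simp only: modlin.simps(2))
    apply (rule exI[of _ G1], rule exI[of _ G2], rule exI[of _ "c1*m1"], rule exI[of _ "c2*m2"])
    using 1 2 assms(3,4) by (simp add: rat_div_cancel)
qed

lemma modlin_rep: "modlin N k f \<Longrightarrow> rep N k f"
  unfolding rep_def by (rule exI[of _ f], rule exI[of _ 1]) simp

lemma double_proj:
  assumes "q < N"
  shows "modlin N (Suc 0) (\<lambda>z. 2 * z ! q)"
proof -
  have "modlin N 0 (\<lambda>z. z ! q)" using assms by (auto simp: modlin.simps)
  then have "rep N 0 (\<lambda>z. z ! q)" by (rule modlin_rep)
  from rep_step[OF this this, of 1 "-1"]
  have "modlin N (Suc 0) (\<lambda>z. \<lfloor>rat_of_int (z!q) / rat_of_int 1\<rfloor> - \<lceil>rat_of_int (z!q) / rat_of_int (-1)\<rceil>)"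
    by simp
  moreover have "(\<lambda>z. \<lfloor>rat_of_int (z!q) / rat_of_int 1\<rfloor> - \<lceil>rat_of_int (z!q) / rat_of_int (-1)\<rceil>) = (\<lambda>z. 2 * z ! q)"
    by (rule ext) (simp add: ceiling_minus)
  ultimately show ?thesis by simp
qed

lemma negdouble_proj:
  assumes "q < N"
  shows "modlin N (Suc 0) (\<lambda>z. - 2 * z ! q)"
proof -
  have "modlin N 0 (\<lambda>z. z ! q)" using assms by (auto simp: modlin.simps)
  then have "rep N 0 (\<lambda>z. z ! q)" by (rule modlin_rep)
  from rep_step[OF this this, of "-1" "1"]
  have "modlin N (Suc 0) (\<lambda>z. \<lfloor>rat_of_int (z!q) / rat_of_int (-1)\<rfloor> - \<lceil>rat_of_int (z!q) / rat_of_int 1\<rceil>)"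
    by simp
  moreover have "(\<lambda>z. \<lfloor>rat_of_int (z!q) / rat_of_int (-1)\<rfloor> - \<lceil>rat_of_int (z!q) / rat_of_int 1\<rceil>) = (\<lambda>z. - 2 * z ! q)"
    by (rule ext) (simp add: ceiling_minus)
  ultimately show ?thesis by simp
qed

lemma rep_proj:
  assumes "q < N"
  shows "rep N (Suc 0) (\<lambda>z. z ! q)"
  unfolding rep_def
  by (rule exI[of _ "\<lambda>z. 2 * z ! q"], rule exI[of _ 2]) (simp add: double_proj assms)

lemma modlin_lift1:
  assumes "modlin N (Suc k) l"
  shows "modlin N (Suc (Suc k)) l"
proof -
  obtain l1 where l1: "modlin N k l1" using assms by (auto simp: modlin.simps)
  have "modlin N (Suc k) (\<lambda>z. \<lfloor>rat_of_int (l1 z) / rat_of_int 1\<rfloor> - \<lceil>rat_of_int (l1 z) / rat_of_int 1\<rceil>)"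
    by (rule rep_step) (auto intro: modlin_rep l1)
  then have Z: "modlin N (Suc k) (\<lambda>z. 0)" by simp
  have "modlin N (Suc (Suc k)) (\<lambda>z. \<lfloor>rat_of_int (l z) / rat_of_int 1\<rfloor> - \<lceil>rat_of_int ((\<lambda>z. 0) z) / rat_of_int 1\<rceil>)"
    by (rule rep_step) (auto intro: modlin_rep assms Z)
  then show ?thesis by simp
qed

lemma modlin_lift:
  assumes "modlin N (Suc k) l" "k \<le> j"
  shows "modlin N (Suc j) l"
  using assms(2)
proof (induction j)
  case 0 then show ?case using assms(1) by simp
next
  case (Suc j)
  show ?case
  proof (cases "k = Suc j")
    case True then show ?thesis using assms(1) by simp
  next
    case False then show ?thesis using Suc by (auto intro: modlin_lift1)
  qed
qed




definition Pl :: "int list \<Rightarrow> (nat \<times> nat) list" where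
  "Pl v = [(i, j). i \<leftarrow> supp_list v, j \<leftarrow> supp_list v, i < j]"
definition Kl :: "int list \<Rightarrow> nat list" where
  "Kl v = filter (\<lambda>k. v ! k = 0) [0..<length v]"

definition U :: "int list \<Rightarrow> int list \<Rightarrow> int list" where
  "U v x = map (\<lambda>(i, j). x ! i div v ! i - x ! j div v ! j) (Pl v) @ map (\<lambda>k. x ! k) (Kl v)"

lemma set_supp: "set (supp_list v) = {i. i < length v \<and> v ! i \<noteq> 0}"
  by (auto simp: supp_list_def)

lemma set_Pl: "set (Pl v) = {(i,j). i < length v \<and> v ! i \<noteq> 0 \<and> j < length v \<and> v ! j \<noteq> 0 \<and> i < j}"
  by (auto simp: Pl_def set_supp split: if_splits)

lemma set_Kl: "set (Kl v) = {k. k < length v \<and> v ! k = 0}"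
  by (auto simp: Kl_def)

lemma Lv_U:
  assumes "length x = length v" "vdvd v x"
  shows "Lv v (map rat_of_int x) = map rat_of_int (U v x)"
proof -
  have 1: "map (\<lambda>(i, j). map rat_of_int x ! i / of_int (v ! i) - map rat_of_int x ! j / of_int (v ! j)) (Pl v)
      = map rat_of_int (map (\<lambda>(i, j). x ! i div v ! i - x ! j div v ! j) (Pl v))"
  proof -
    have "rat_of_int (x ! i) / of_int (v ! i) = rat_of_int (x ! i div v ! i)" if "i < length v" "v ! i \<noteq> 0" for i
    proof -
      have "v ! i dvd x ! i" using assms(2) that unfolding vdvd_def by auto
      then show ?thesis using that by (simp add: of_int_div)
    qed
    then show ?thesis using assms(1) by (auto simp: set_Pl)
  qed
  have 2: "map (\<lambda>k. map rat_of_int x ! k) (Kl v) = map rat_of_int (map (\<lambda>k. x ! k) (Kl v))"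
    using assms(1) by (auto simp: set_Kl)
  show ?thesis unfolding Lv_def U_def Pl_def[symmetric] Kl_def[symmetric] using 1 2 by simp
qed

lemma length_U: "length (U v x) = length (Pl v) + length (Kl v)"
  by (simp add: U_def)

lemma U_nth1: "p < length (Pl v) \<Longrightarrow> U v x ! p = (case Pl v ! p of (i,j) \<Rightarrow> x ! i div v ! i - x ! j div v ! j)"
  by (simp add: U_def nth_append)

lemma U_nth2: "length (Pl v) \<le> p \<Longrightarrow> p < length (Pl v) + length (Kl v) \<Longrightarrow> U v x ! p = x ! (Kl v ! (p - length (Pl v)))"
  by (simp add: U_def nth_append)




definition lof :: "int \<Rightarrow> int \<Rightarrow> int \<Rightarrow> int" where
  "lof c a b = (if 0 < c then \<lceil>rat_of_int a / rat_of_int c\<rceil> else \<lceil>rat_of_int b / rat_of_int c\<rceil>)"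
definition hif :: "int \<Rightarrow> int \<Rightarrow> int \<Rightarrow> int" where
  "hif c a b = (if 0 < c then \<lfloor>rat_of_int b / rat_of_int c\<rfloor> else \<lfloor>rat_of_int a / rat_of_int c\<rfloor>)"

lemma box_div:
  assumes "c \<noteq> 0"
  shows "(a \<le> c * y \<and> c * y \<le> b) \<longleftrightarrow> (lof c a b \<le> y \<and> y \<le> hif c a b)"
proof (cases "0 < c")
  case True
  have "a \<le> c * y \<longleftrightarrow> rat_of_int a / rat_of_int c \<le> rat_of_int y"
    using True by (simp add: pos_divide_le_eq mult.commute flip: of_int_mult of_int_le_iff)
  moreover have "c * y \<le> b \<longleftrightarrow> rat_of_int y \<le> rat_of_int b / rat_of_int c"
    using True by (simp add: pos_le_divide_eq mult.commute flip: of_int_mult of_int_le_iff)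
  ultimately show ?thesis using True by (simp add: lof_def hif_def ceiling_le_iff le_floor_iff)
next
  case False
  then have c: "c < 0" using assms by simp
  have "a \<le> c * y \<longleftrightarrow> rat_of_int y \<le> rat_of_int a / rat_of_int c"
    using c by (simp add: neg_le_divide_eq mult.commute flip: of_int_mult of_int_le_iff)
  moreover have "c * y \<le> b \<longleftrightarrow> rat_of_int b / rat_of_int c \<le> rat_of_int y"
    using c by (simp add: neg_divide_le_eq mult.commute flip: of_int_mult of_int_le_iff)
  ultimately show ?thesis using False by (auto simp: lof_def hif_def ceiling_le_iff le_floor_iff)
qed

definition lo :: "int list \<Rightarrow> nat \<Rightarrow> int list \<Rightarrow> int" where
  "lo v i z = lof (v ! i) (z ! (2*i)) (z ! (2*i+1))"
definition hi :: "int list \<Rightarrow> nat \<Rightarrow> int list \<Rightarrow> int" where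
  "hi v i z = hif (v ! i) (z ! (2*i)) (z ! (2*i+1))"

definition aa :: "int list \<Rightarrow> int list \<Rightarrow> int list" where
  "aa v z = map (\<lambda>(i, j). lo v i z - hi v j z) (Pl v) @ map (\<lambda>k. z ! (2*k)) (Kl v)"
definition bb :: "int list \<Rightarrow> int list \<Rightarrow> int list" where
  "bb v z = map (\<lambda>(i, j). hi v i z - lo v j z) (Pl v) @ map (\<lambda>k. z ! (2*k+1)) (Kl v)"

lemma length_aa: "length (aa v z) = length (Pl v) + length (Kl v)" by (simp add: aa_def)
lemma length_bb: "length (bb v z) = length (Pl v) + length (Kl v)" by (simp add: bb_def)

lemma aa_nth1: "p < length (Pl v) \<Longrightarrow> aa v z ! p = (case Pl v ! p of (i,j) \<Rightarrow> lo v i z - hi v j z)"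
  by (simp add: aa_def nth_append)
lemma aa_nth2: "length (Pl v) \<le> p \<Longrightarrow> p < length (Pl v) + length (Kl v) \<Longrightarrow> aa v z ! p = z ! (2 * (Kl v ! (p - length (Pl v))))"
  by (simp add: aa_def nth_append)
lemma bb_nth1: "p < length (Pl v) \<Longrightarrow> bb v z ! p = (case Pl v ! p of (i,j) \<Rightarrow> hi v i z - lo v j z)"
  by (simp add: bb_def nth_append)
lemma bb_nth2: "length (Pl v) \<le> p \<Longrightarrow> p < length (Pl v) + length (Kl v) \<Longrightarrow> bb v z ! p = z ! (2 * (Kl v ! (p - length (Pl v))) + 1)"
  by (simp add: bb_def nth_append)

lemma sub_mult_nat:
  assumes "int_subgroup n A" "v \<in> A"
  shows "map (\<lambda>y. int k * y) v \<in> A"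
proof (induction k)
  case 0
  have "length v = n" using assms unfolding int_subgroup_def by auto
  then have "map (\<lambda>y. int 0 * y) v = zerovec n" by (simp add: zerovec_def map_replicate_const)
  then show ?case using assms unfolding int_subgroup_def by simp
next
  case (Suc k)
  have "map2 (+) (map (\<lambda>y. int k * y) v) v \<in> A" using Suc assms unfolding int_subgroup_def by blast
  moreover have "map2 (+) (map (\<lambda>y. int k * y) v) v = map (\<lambda>y. int (Suc k) * y) v"
    by (induction v) (auto simp: algebra_simps)
  ultimately show ?case by simp
qed

lemma sub_mult:
  assumes "int_subgroup n A" "v \<in> A"
  shows "map (\<lambda>y. t * y) v \<in> A"
proof (cases "0 \<le> t")
  case True
  then show ?thesis using sub_mult_nat[OF assms, of "nat t"] by simp
next
  case False
  have mem: "map uminus (map (\<lambda>y. int (nat (-t)) * y) v) \<in> A"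
    using sub_mult_nat[OF assms, of "nat (-t)"] assms(1) unfolding int_subgroup_def by blast
  have eq: "map uminus (map (\<lambda>y. int (nat (-t)) * y) v) = map (\<lambda>y. t * y) v"
    using False by auto
  show ?thesis using mem unfolding eq .
qed

lemma interval_common:
  fixes L H :: "nat \<Rightarrow> int"
  assumes "finite S" "S \<noteq> {}" "\<forall>i\<in>S. \<forall>j\<in>S. L j \<le> H i"
  shows "\<exists>t. \<forall>i\<in>S. L i \<le> t \<and> t \<le> H i"
proof -
  define t where "t = Max (L ` S)"
  have "\<forall>i\<in>S. L i \<le> t" unfolding t_def using assms by auto
  moreover have "\<forall>i\<in>S. t \<le> H i"
  proof
    fix i assume "i \<in> S"
    have "t \<in> L ` S" unfolding t_def using assms by (intro Max_in) auto
    then show "t \<le> H i" using assms(3) \<open>i \<in> S\<close> by auto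
  qed
  ultimately show ?thesis by blast
qed




lemma core:
  assumes sg: "int_subgroup n A" and vA: "v \<in> A" and v0: "v \<noteq> zerovec n"
    and dv: "\<forall>w\<in>A. vdvd v w" and la: "length a = n" and lb: "length b = n"
    and z: "z = interleave a b"
  shows "(\<exists>x\<in>A. \<forall>i<n. a!i \<le> x!i \<and> x!i \<le> b!i) \<longleftrightarrow>
     ((\<forall>i\<in>set (supp_list v). lo v i z \<le> hi v i z) \<and>
      (\<exists>x\<in>A. \<forall>p<length (Pl v) + length (Kl v). aa v z ! p \<le> U v x ! p \<and> U v x ! p \<le> bb v z ! p))"
proof -
  have lenA: "\<And>x. x \<in> A \<Longrightarrow> length x = n" using sg unfolding int_subgroup_def by auto
  have lv: "length v = n" using lenA vA by simp
  have zi: "\<And>i. i < n \<Longrightarrow> z ! (2*i) = a ! i \<and> z ! (2*i+1) = b ! i"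
    using interleave_nth[of a b] la lb z by simp
  have lobox: "\<And>i y. i < n \<Longrightarrow> v ! i \<noteq> 0 \<Longrightarrow>
      (a!i \<le> v!i * y \<and> v!i * y \<le> b!i) \<longleftrightarrow> (lo v i z \<le> y \<and> y \<le> hi v i z)"
    using box_div zi unfolding lo_def hi_def by simp
  have xdiv: "\<And>x i. x \<in> A \<Longrightarrow> i < n \<Longrightarrow> v ! i \<noteq> 0 \<Longrightarrow> x ! i = v ! i * (x ! i div v ! i)"
    using dv lv unfolding vdvd_def by auto
  have Pmem: "\<And>p. p < length (Pl v) \<Longrightarrow> fst (Pl v ! p) < n \<and> v ! fst (Pl v ! p) \<noteq> 0 \<and>
       snd (Pl v ! p) < n \<and> v ! snd (Pl v ! p) \<noteq> 0 \<and> fst (Pl v ! p) < snd (Pl v ! p)"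
  proof -
    fix p assume "p < length (Pl v)"
    then have "Pl v ! p \<in> set (Pl v)" by simp
    moreover obtain i j where "Pl v ! p = (i, j)" by (cases "Pl v ! p")
    ultimately show "?thesis p" using lv by (simp add: set_Pl)
  qed
  have Kmem: "\<And>q. q < length (Kl v) \<Longrightarrow> Kl v ! q < n \<and> v ! (Kl v ! q) = 0"
  proof -
    fix q assume "q < length (Kl v)"
    then have "Kl v ! q \<in> set (Kl v)" by simp
    then show "?thesis q" using lv by (auto simp: set_Kl)
  qed
  show ?thesis
  proof
    assume "\<exists>x\<in>A. \<forall>i<n. a!i \<le> x!i \<and> x!i \<le> b!i"
    then obtain x where xA: "x \<in> A" and xb: "\<forall>i<n. a!i \<le> x!i \<and> x!i \<le> b!i" by blast
    have yb: "\<And>i. i < n \<Longrightarrow> v ! i \<noteq> 0 \<Longrightarrow> lo v i z \<le> x ! i div v ! i \<and> x ! i div v ! i \<le> hi v i z"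
      using lobox xdiv[OF xA] xb by metis
    have diag: "\<forall>i\<in>set (supp_list v). lo v i z \<le> hi v i z"
      using yb lv by (force simp: set_supp)
    have "\<forall>p<length (Pl v) + length (Kl v). aa v z ! p \<le> U v x ! p \<and> U v x ! p \<le> bb v z ! p"
    proof (intro allI impI)
      fix p assume p: "p < length (Pl v) + length (Kl v)"
      show "aa v z ! p \<le> U v x ! p \<and> U v x ! p \<le> bb v z ! p"
      proof (cases "p < length (Pl v)")
        case True
        obtain i j where ij: "Pl v ! p = (i, j)" by (cases "Pl v ! p")
        have "i < n" "v ! i \<noteq> 0" "j < n" "v ! j \<noteq> 0" using Pmem[OF True] ij by auto
        then show ?thesis using yb[of i] yb[of j] ij True
          by (simp add: aa_nth1 bb_nth1 U_nth1)
      next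
        case False
        define k where "k = Kl v ! (p - length (Pl v))"
        have "k < n" using Kmem[of "p - length (Pl v)"] p False k_def by auto
        then show ?thesis using False p zi[of k] xb
          by (simp add: aa_nth2 bb_nth2 U_nth2 k_def[symmetric])
      qed
    qed
    then show "(\<forall>i\<in>set (supp_list v). lo v i z \<le> hi v i z) \<and>
      (\<exists>x\<in>A. \<forall>p<length (Pl v) + length (Kl v). aa v z ! p \<le> U v x ! p \<and> U v x ! p \<le> bb v z ! p)"
      using diag xA by blast
  next
    assume "(\<forall>i\<in>set (supp_list v). lo v i z \<le> hi v i z) \<and>
      (\<exists>x\<in>A. \<forall>p<length (Pl v) + length (Kl v). aa v z ! p \<le> U v x ! p \<and> U v x ! p \<le> bb v z ! p)"
    then obtain x where diag: "\<forall>i\<in>set (supp_list v). lo v i z \<le> hi v i z" and xA: "x \<in> A"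
      and xb: "\<forall>p<length (Pl v) + length (Kl v). aa v z ! p \<le> U v x ! p \<and> U v x ! p \<le> bb v z ! p"
      by blast
    define S where "S = set (supp_list v)"
    define y where "y = (\<lambda>i. x ! i div v ! i)"
    define L where "L = (\<lambda>i. lo v i z - y i)"
    define H where "H = (\<lambda>i. hi v i z - y i)"
    have Sd: "S = {i. i < n \<and> v ! i \<noteq> 0}" using lv by (simp add: S_def set_supp)
    have pair: "L j \<le> H i" if "i \<in> S" "j \<in> S" for i j
    proof -
      consider "i = j" | "i < j" | "j < i" by linarith
      then show ?thesis
      proof cases
        case 1 then show ?thesis using diag that by (simp add: L_def H_def S_def)
      next
        case 2
        then have "(i, j) \<in> set (Pl v)" using that Sd lv by (simp add: set_Pl)
        then obtain p where p: "p < length (Pl v)" "Pl v ! p = (i, j)" by (metis in_set_conv_nth)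
        then have "U v x ! p \<le> bb v z ! p" using xb by simp
        then show ?thesis using p by (simp add: bb_nth1 U_nth1 L_def H_def y_def)
      next
        case 3
        then have "(j, i) \<in> set (Pl v)" using that Sd lv by (simp add: set_Pl)
        then obtain p where p: "p < length (Pl v)" "Pl v ! p = (j, i)" by (metis in_set_conv_nth)
        then have "aa v z ! p \<le> U v x ! p" using xb by simp
        then show ?thesis using p by (simp add: aa_nth1 U_nth1 L_def H_def y_def)
      qed
    qed
    have "S \<noteq> {}"
    proof
      assume "S = {}"
      then have "\<forall>i<n. v ! i = 0" using Sd by auto
      then have "v = zerovec n" using lv by (simp add: zerovec_def list_eq_iff_nth_eq)
      then show False using v0 by simp
    qed
    then obtain t where t: "\<forall>i\<in>S. L i \<le> t \<and> t \<le> H i"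
      using interval_common[of S L H] pair by (auto simp: S_def)
    define x' where "x' = map2 (+) x (map (\<lambda>y. t * y) v)"
    have x'A: "x' \<in> A" using sub_mult[OF sg vA, of t] xA sg unfolding x'_def int_subgroup_def by blast
    have x'i: "\<And>i. i < n \<Longrightarrow> x' ! i = x ! i + t * v ! i" using lenA[OF xA] lv by (simp add: x'_def)
    have "\<forall>i<n. a!i \<le> x'!i \<and> x'!i \<le> b!i"
    proof (intro allI impI)
      fix i assume i: "i < n"
      show "a!i \<le> x'!i \<and> x'!i \<le> b!i"
      proof (cases "v ! i = 0")
        case False
        have "x' ! i = v ! i * (y i + t)" using x'i[OF i] xdiv[OF xA i False]
          by (simp add: y_def algebra_simps)
        moreover have "lo v i z \<le> y i + t \<and> y i + t \<le> hi v i z"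
          using t i False Sd by (auto simp: L_def H_def)
        ultimately show ?thesis using lobox[OF i False] by simp
      next
        case True
        then have "i \<in> set (Kl v)" using i lv by (simp add: set_Kl)
        then obtain q where q: "q < length (Kl v)" "Kl v ! q = i" by (metis in_set_conv_nth)
        have "aa v z ! (length (Pl v) + q) \<le> U v x ! (length (Pl v) + q) \<and>
              U v x ! (length (Pl v) + q) \<le> bb v z ! (length (Pl v) + q)" using xb q by simp
        then show ?thesis using q zi[OF i] x'i[OF i] True by (simp add: aa_nth2 bb_nth2 U_nth2)
      qed
    qed
    then show "\<exists>x\<in>A. \<forall>i<n. a!i \<le> x!i \<and> x!i \<le> b!i" using x'A by blast
  qed
qed




definition sub :: "int list \<Rightarrow> int list \<Rightarrow> int list" where
  "sub v z = interleave (aa v z) (bb v z)"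

lemma length_sub: "length (sub v z) = 2 * (length (Pl v) + length (Kl v))"
  by (simp add: sub_def interleave_len length_aa length_bb)

lemma modlin_cong:
  assumes "modlin N k f" "\<forall>z. length z = N \<longrightarrow> f z = g z"
  shows "modlin N k g"
  using assms by (cases k) (auto simp: modlin.simps)

lemma rep_cong:
  assumes "rep N k f" "\<forall>z. length z = N \<longrightarrow> f z = g z"
  shows "rep N k g"
  using assms unfolding rep_def by auto

lemma hilo_modlin:
  assumes "q1 < N" "q2 < N" "q3 < N" "q4 < N" "c \<noteq> 0" "d \<noteq> 0"
  shows "modlin N (Suc 0) (\<lambda>z. hif c (z!q1) (z!q2) - lof d (z!q3) (z!q4))"
proof -
  have r1: "rep N 0 (\<lambda>z. z ! (if 0 < c then q2 else q1))"
    by (rule modlin_rep) (use assms in \<open>auto simp: modlin.simps\<close>)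
  have r2: "rep N 0 (\<lambda>z. z ! (if 0 < d then q3 else q4))"
    by (rule modlin_rep) (use assms in \<open>auto simp: modlin.simps\<close>)
  have "modlin N (Suc 0) (\<lambda>z. \<lfloor>rat_of_int (z ! (if 0 < c then q2 else q1)) / rat_of_int c\<rfloor> -
          \<lceil>rat_of_int (z ! (if 0 < d then q3 else q4)) / rat_of_int d\<rceil>)"
    by (rule rep_step[OF r1 r2 assms(5,6)])
  then show ?thesis by (rule modlin_cong) (auto simp: hif_def lof_def)
qed

lemma hilo_vmodlin:
  assumes "i < n" "j < n" "v ! i \<noteq> 0" "v ! j \<noteq> 0"
  shows "modlin (2*n) (Suc 0) (\<lambda>z. hi v i z - lo v j z)"
  unfolding hi_def lo_def by (rule hilo_modlin) (use assms in auto)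

lemma sub_rep:
  assumes lv: "length v = n" and q: "q < 2 * (length (Pl v) + length (Kl v))"
  shows "rep (2*n) (Suc 0) (\<lambda>z. sub v z ! q)"
proof -
  define M where "M = length (Pl v) + length (Kl v)"
  define p where "p = q div 2"
  define e where "e = q mod 2"
  have pe: "q = 2*p + e" "e < 2" "p < M" using q unfolding M_def p_def e_def by auto
  have subn: "\<And>z. sub v z ! (2*p) = aa v z ! p \<and> sub v z ! (2*p+1) = bb v z ! p"
    unfolding sub_def using interleave_nth[of "aa v z" "bb v z" p for z] pe(3)
    by (simp add: length_aa length_bb M_def)
  show ?thesis
  proof (cases "p < length (Pl v)")
    case True
    obtain i j where ij: "Pl v ! p = (i, j)" by (cases "Pl v ! p")
    have "(i, j) \<in> set (Pl v)" using True ij by (metis nth_mem)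
    then have ijm: "i < n" "j < n" "v ! i \<noteq> 0" "v ! j \<noteq> 0" using lv by (auto simp: set_Pl)
    show ?thesis
    proof (cases "e = 0")
      case True
      have "rep (2*n) (Suc 0) (\<lambda>z. lo v i z - hi v j z)"
        unfolding rep_def
        by (rule exI[of _ "\<lambda>z. hi v j z - lo v i z"], rule exI[of _ "-1"])
           (simp add: hilo_vmodlin ijm)
      then show ?thesis by (rule rep_cong) (use subn True pe ij \<open>p < length (Pl v)\<close> in \<open>simp add: aa_nth1\<close>)
    next
      case False
      then have e1: "e = 1" using pe by simp
      have "rep (2*n) (Suc 0) (\<lambda>z. hi v i z - lo v j z)"
        by (rule modlin_rep) (simp add: hilo_vmodlin ijm)
      then show ?thesis by (rule rep_cong) (use subn e1 pe ij \<open>p < length (Pl v)\<close> in \<open>simp add: bb_nth1\<close>)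
    qed
  next
    case False
    define k where "k = Kl v ! (p - length (Pl v))"
    have "k \<in> set (Kl v)" using False pe(3) unfolding k_def M_def by simp
    then have kn: "k < n" using lv by (simp add: set_Kl)
    show ?thesis
    proof (cases "e = 0")
      case True
      have "rep (2*n) (Suc 0) (\<lambda>z. z ! (2*k))" by (rule rep_proj) (use kn in simp)
      then show ?thesis by (rule rep_cong) (use subn True pe False in \<open>simp add: aa_nth2 M_def k_def\<close>)
    next
      case False': False
      then have e1: "e = 1" using pe by simp
      have "rep (2*n) (Suc 0) (\<lambda>z. z ! (2*k+1))" by (rule rep_proj) (use kn in simp)
      then show ?thesis by (rule rep_cong) (use subn e1 pe False in \<open>simp add: bb_nth2 M_def k_def\<close>)
    qed
  qed
qed

lemma comp_rep:
  assumes lv: "length v = n"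
  shows "modlin (2 * (length (Pl v) + length (Kl v))) k l \<Longrightarrow> rep (2*n) (Suc k) (\<lambda>z. l (sub v z))"
proof (induction k arbitrary: l)
  case 0
  then obtain q where q: "q < 2 * (length (Pl v) + length (Kl v))"
    "\<forall>x. length x = 2 * (length (Pl v) + length (Kl v)) \<longrightarrow> l x = x ! q"
    by (auto simp: modlin.simps)
  show ?case by (rule rep_cong[OF sub_rep[OF lv q(1)]]) (simp add: q(2) length_sub)
next
  case (Suc k)
  then obtain l1 l2 m1 m2 where h: "modlin (2 * (length (Pl v) + length (Kl v))) k l1"
    "modlin (2 * (length (Pl v) + length (Kl v))) k l2" "m1 \<noteq> 0" "m2 \<noteq> 0"
    "\<forall>x. length x = 2 * (length (Pl v) + length (Kl v)) \<longrightarrow>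
       l x = \<lfloor>rat_of_int (l1 x) / rat_of_int m1\<rfloor> - \<lceil>rat_of_int (l2 x) / rat_of_int m2\<rceil>"
    by (auto simp: modlin.simps)
  have "modlin (2*n) (Suc (Suc k)) (\<lambda>z. \<lfloor>rat_of_int (l1 (sub v z)) / rat_of_int m1\<rfloor> - \<lceil>rat_of_int (l2 (sub v z)) / rat_of_int m2\<rceil>)"
    by (rule rep_step[OF Suc.IH[OF h(1)] Suc.IH[OF h(2)] h(3,4)])
  then have "modlin (2*n) (Suc (Suc k)) (\<lambda>z. l (sub v z))"
    by (rule modlin_cong) (simp add: h(5) length_sub)
  then show ?case by (rule modlin_rep)
qed

lemma comp_suc:
  assumes lv: "length v = n" and "modlin (2 * (length (Pl v) + length (Kl v))) (Suc k) l"
  shows "modlin (2*n) (Suc (Suc k)) (\<lambda>z. l (sub v z))"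
proof -
  obtain l1 l2 m1 m2 where h: "modlin (2 * (length (Pl v) + length (Kl v))) k l1"
    "modlin (2 * (length (Pl v) + length (Kl v))) k l2" "m1 \<noteq> 0" "m2 \<noteq> 0"
    "\<forall>x. length x = 2 * (length (Pl v) + length (Kl v)) \<longrightarrow>
       l x = \<lfloor>rat_of_int (l1 x) / rat_of_int m1\<rfloor> - \<lceil>rat_of_int (l2 x) / rat_of_int m2\<rceil>"
    using assms(2) by (auto simp: modlin.simps)
  have "modlin (2*n) (Suc (Suc k)) (\<lambda>z. \<lfloor>rat_of_int (l1 (sub v z)) / rat_of_int m1\<rfloor> - \<lceil>rat_of_int (l2 (sub v z)) / rat_of_int m2\<rceil>)"
    by (rule rep_step[OF comp_rep[OF lv h(1)] comp_rep[OF lv h(2)] h(3,4)])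
  then show ?thesis by (rule modlin_cong) (simp add: h(5) length_sub)
qed




definition boxp :: "nat \<Rightarrow> int list set \<Rightarrow> (int list \<Rightarrow> int) set \<Rightarrow> bool" where
  "boxp n A E \<longleftrightarrow> (\<forall>a b. length a = n \<longrightarrow> length b = n \<longrightarrow> (\<forall>i<n. a ! i \<le> b ! i) \<longrightarrow>
       ((\<exists>x\<in>A. \<forall>i<n. a ! i \<le> x ! i \<and> x ! i \<le> b ! i) \<longleftrightarrow>
        (\<forall>l\<in>E. 0 \<le> l (interleave a b))))"

lemma indep:
  assumes sg: "int_subgroup n A" and vA: "v \<in> A" and v0: "v \<noteq> zerovec n"
    and dv: "\<forall>w\<in>A. vdvd v w" and wsA: "set ws \<subseteq> A"
    and ind: "lin_indep_Z (length (Pl v) + length (Kl v)) (map (U v) ws)"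
  shows "lin_indep_Z n (v # ws)"
  unfolding lin_indep_Z_def
proof (rule allI, rule impI)
  fix c :: "nat \<Rightarrow> int"
  assume H: "\<forall>k<n. (\<Sum>i<length (v # ws). c i * (v # ws) ! i ! k) = 0"
  have lenA: "\<And>x. x \<in> A \<Longrightarrow> length x = n" using sg unfolding int_subgroup_def by auto
  have lv: "length v = n" using lenA vA by simp
  have xdiv: "\<And>x i. x \<in> A \<Longrightarrow> i < n \<Longrightarrow> v ! i \<noteq> 0 \<Longrightarrow> x ! i = v ! i * (x ! i div v ! i)"
    using dv lv unfolding vdvd_def by auto
  have wsi: "\<And>i. i < length ws \<Longrightarrow> ws ! i \<in> A" using wsA by auto
  define c' where "c' = (\<lambda>i. c (Suc i))"
  have H': "\<And>k. k < n \<Longrightarrow> (\<Sum>i<length ws. c' i * ws ! i ! k) = - (c 0 * v ! k)"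
  proof -
    fix k assume "k < n"
    then have "(\<Sum>i<Suc (length ws). c i * (v # ws) ! i ! k) = 0" using H by simp
    then have "c 0 * v ! k + (\<Sum>i<length ws. c (Suc i) * ws ! i ! k) = 0"
      by (simp only: sum.lessThan_Suc_shift) simp
    then show "(\<Sum>i<length ws. c' i * ws ! i ! k) = - (c 0 * v ! k)" unfolding c'_def by simp
  qed
  have ysum: "(\<Sum>i<length ws. c' i * (ws ! i ! a div v ! a)) = - c 0"
    if a: "a < n" "v ! a \<noteq> 0" for a
  proof -
    have "v ! a * (\<Sum>i<length ws. c' i * (ws ! i ! a div v ! a)) = (\<Sum>i<length ws. c' i * ws ! i ! a)"
      unfolding sum_distrib_left
    proof (rule sum.cong)
      fix i assume "i \<in> {..<length ws}"
      then have "ws ! i ! a = v ! a * (ws ! i ! a div v ! a)" using xdiv[OF wsi a] by simp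
      then show "v ! a * (c' i * (ws ! i ! a div v ! a)) = c' i * ws ! i ! a" by (simp add: algebra_simps)
    qed simp
    also have "\<dots> = v ! a * (- c 0)" using H'[OF a(1)] by simp
    finally have "v ! a * (\<Sum>i<length ws. c' i * (ws ! i ! a div v ! a)) = v ! a * (- c 0)" .
    then show ?thesis using a(2) by (metis mult_left_cancel)
  qed
  have sums: "\<forall>p<length (Pl v) + length (Kl v). (\<Sum>i<length (map (U v) ws). c' i * map (U v) ws ! i ! p) = 0"
  proof (intro allI impI)
    fix p assume p: "p < length (Pl v) + length (Kl v)"
    show "(\<Sum>i<length (map (U v) ws). c' i * map (U v) ws ! i ! p) = 0"
    proof (cases "p < length (Pl v)")
      case True
      obtain i j where ij: "Pl v ! p = (i, j)" by (cases "Pl v ! p")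
      have "(i, j) \<in> set (Pl v)" using True ij by (metis nth_mem)
      then have ijm: "i < n" "j < n" "v ! i \<noteq> 0" "v ! j \<noteq> 0" using lv by (auto simp: set_Pl)
      have "(\<Sum>l<length (map (U v) ws). c' l * map (U v) ws ! l ! p)
          = (\<Sum>l<length ws. c' l * (ws ! l ! i div v ! i)) - (\<Sum>l<length ws. c' l * (ws ! l ! j div v ! j))"
        by (simp add: U_nth1 True ij algebra_simps sum_subtractf)
      then show ?thesis using ysum[OF ijm(1,3)] ysum[OF ijm(2,4)] by simp
    next
      case False
      define k where "k = Kl v ! (p - length (Pl v))"
      have "k \<in> set (Kl v)" using False p unfolding k_def by simp
      then have k: "k < n" "v ! k = 0" using lv by (auto simp: set_Kl)
      have "(\<Sum>l<length (map (U v) ws). c' l * map (U v) ws ! l ! p) = (\<Sum>l<length ws. c' l * ws ! l ! k)"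
        using False p by (simp add: U_nth2 k_def)
      then show ?thesis using H'[OF k(1)] k(2) by simp
    qed
  qed
  have c'0: "\<forall>i<length (map (U v) ws). c' i = 0"
    using ind sums unfolding lin_indep_Z_def by blast
  have "c 0 = 0"
  proof -
    obtain k where k: "k < n" "v ! k \<noteq> 0"
    proof -
      have "\<not> (\<forall>k<n. v ! k = 0)"
      proof
        assume "\<forall>k<n. v ! k = 0"
        then have "v = zerovec n" using lv by (simp add: zerovec_def list_eq_iff_nth_eq)
        then show False using v0 by simp
      qed
      then show ?thesis using that by blast
    qed
    have "(\<Sum>i<length ws. c' i * ws ! i ! k) = 0" using c'0 by simp
    then have "c 0 * v ! k = 0" using H'[OF k(1)] by simp
    then show ?thesis using k(2) by simp
  qed
  then show "\<forall>i<length (v # ws). c i = 0" using c'0 unfolding c'_def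
    by (auto simp: less_Suc_eq_0_disj)
qed




lemma base_case:
  assumes sg: "int_subgroup n A" and vA: "v \<in> A" and v0: "v \<noteq> zerovec n"
    and dv: "\<forall>w\<in>A. vdvd v w" and UA: "U v ` A = {zerovec m}"
  shows "\<exists>E. finite E \<and> (\<forall>l\<in>E. modlin (2*n) (Suc 0) l) \<and> boxp n A E"
proof -
  have lenA: "\<And>x. x \<in> A \<Longrightarrow> length x = n" using sg unfolding int_subgroup_def by auto
  have lv: "length v = n" using lenA vA by simp
  define S where "S = set (supp_list v)"
  have Sd: "S = {i. i < n \<and> v ! i \<noteq> 0}" using lv by (simp add: S_def set_supp)
  have Kd: "set (Kl v) = {k. k < n \<and> v ! k = 0}" using lv by (simp add: set_Kl)
  define M where "M = length (Pl v) + length (Kl v)"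
  have "U v v \<in> U v ` A" using vA by blast
  then have "U v v = zerovec m" using UA by blast
  then have Mm: "M = m" using length_U[of v v] unfolding M_def by (simp add: zerovec_def)
  have U0: "U v x ! p = 0" if "x \<in> A" "p < M" for x p
  proof -
    have "U v x = zerovec m" using UA that(1) by blast
    then show ?thesis using that(2) Mm by (simp add: zerovec_def)
  qed
  define E1 where "E1 = (\<lambda>(i,j). \<lambda>z. hi v j z - lo v i z) ` (S \<times> S)"
  define E2 where "E2 = (\<lambda>k. \<lambda>z::int list. 2 * z ! (2*k+1)) ` set (Kl v)"
  define E3 where "E3 = (\<lambda>k. \<lambda>z::int list. - 2 * z ! (2*k)) ` set (Kl v)"
  define E where "E = E1 \<union> E2 \<union> E3"
  have fin: "finite E" unfolding E_def E1_def E2_def E3_def S_def by simp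
  have ord: "\<forall>l\<in>E. modlin (2*n) (Suc 0) l"
  proof
    fix l assume "l \<in> E"
    then consider "l \<in> E1" | "l \<in> E2" | "l \<in> E3" unfolding E_def by blast
    then show "modlin (2*n) (Suc 0) l"
    proof cases
      case 1
      then obtain i j where "i \<in> S" "j \<in> S" "l = (\<lambda>z. hi v j z - lo v i z)" unfolding E1_def by auto
      then show ?thesis using hilo_vmodlin[of j n i v] Sd by auto
    next
      case 2
      then obtain k where "k \<in> set (Kl v)" "l = (\<lambda>z. 2 * z ! (2*k+1))" unfolding E2_def by auto
      then show ?thesis using double_proj[of "2*k+1" "2*n"] Kd by auto
    next
      case 3
      then obtain k where "k \<in> set (Kl v)" "l = (\<lambda>z. - 2 * z ! (2*k))" unfolding E3_def by auto
      then show ?thesis using negdouble_proj[of "2*k" "2*n"] Kd by auto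
    qed
  qed
  have box: "boxp n A E"
    unfolding boxp_def
  proof (intro allI impI)
    fix a b :: "int list"
    assume la: "length a = n" and lb: "length b = n" and ab: "\<forall>i<n. a ! i \<le> b ! i"
    define z where "z = interleave a b"
    have zi: "\<And>i. i < n \<Longrightarrow> z ! (2*i) = a ! i \<and> z ! (2*i+1) = b ! i"
      using interleave_nth[of a b] la lb z_def by simp
    have RHS: "(\<forall>l\<in>E. 0 \<le> l z) \<longleftrightarrow>
       (\<forall>i\<in>S. \<forall>j\<in>S. lo v i z \<le> hi v j z) \<and> (\<forall>k\<in>set (Kl v). a ! k \<le> 0 \<and> 0 \<le> b ! k)"
    proof -
      have r1: "(\<forall>l\<in>E1. 0 \<le> l z) \<longleftrightarrow> (\<forall>i\<in>S. \<forall>j\<in>S. lo v i z \<le> hi v j z)"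
        unfolding E1_def by auto
      have r2: "(\<forall>l\<in>E2. 0 \<le> l z) \<longleftrightarrow> (\<forall>k\<in>set (Kl v). 0 \<le> b ! k)"
      proof -
        have "(\<forall>l\<in>E2. 0 \<le> l z) \<longleftrightarrow> (\<forall>k\<in>set (Kl v). 0 \<le> 2 * z ! (2*k+1))"
          unfolding E2_def by simp
        also have "\<dots> \<longleftrightarrow> (\<forall>k\<in>set (Kl v). 0 \<le> b ! k)"
        proof (rule ball_cong[OF refl])
          fix k assume "k \<in> set (Kl v)"
          then have "k < n" using Kd by simp
          then show "0 \<le> 2 * z ! (2*k+1) \<longleftrightarrow> 0 \<le> b ! k" using zi[of k] by simp
        qed
        finally show ?thesis .
      qed
      have r3: "(\<forall>l\<in>E3. 0 \<le> l z) \<longleftrightarrow> (\<forall>k\<in>set (Kl v). a ! k \<le> 0)"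
      proof -
        have "(\<forall>l\<in>E3. 0 \<le> l z) \<longleftrightarrow> (\<forall>k\<in>set (Kl v). 0 \<le> - 2 * z ! (2*k))"
          unfolding E3_def by simp
        also have "\<dots> \<longleftrightarrow> (\<forall>k\<in>set (Kl v). a ! k \<le> 0)"
        proof (rule ball_cong[OF refl])
          fix k assume "k \<in> set (Kl v)"
          then have "k < n" using Kd by simp
          then show "0 \<le> - 2 * z ! (2*k) \<longleftrightarrow> a ! k \<le> 0" using zi[of k] by simp
        qed
        finally show ?thesis .
      qed
      show ?thesis unfolding E_def using r1 r2 r3 by blast
    qed
    have core': "(\<exists>x\<in>A. \<forall>i<n. a!i \<le> x!i \<and> x!i \<le> b!i) \<longleftrightarrow>
     ((\<forall>i\<in>S. lo v i z \<le> hi v i z) \<and> (\<forall>p<M. aa v z ! p \<le> 0 \<and> 0 \<le> bb v z ! p))"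
    proof -
      have e: "(\<exists>x\<in>A. \<forall>p<M. aa v z ! p \<le> U v x ! p \<and> U v x ! p \<le> bb v z ! p) \<longleftrightarrow>
         (\<forall>p<M. aa v z ! p \<le> 0 \<and> 0 \<le> bb v z ! p)"
      proof
        assume "\<exists>x\<in>A. \<forall>p<M. aa v z ! p \<le> U v x ! p \<and> U v x ! p \<le> bb v z ! p"
        then obtain x where "x \<in> A" "\<forall>p<M. aa v z ! p \<le> U v x ! p \<and> U v x ! p \<le> bb v z ! p" by blast
        then show "\<forall>p<M. aa v z ! p \<le> 0 \<and> 0 \<le> bb v z ! p" using U0 by simp
      next
        assume "\<forall>p<M. aa v z ! p \<le> 0 \<and> 0 \<le> bb v z ! p"
        then show "\<exists>x\<in>A. \<forall>p<M. aa v z ! p \<le> U v x ! p \<and> U v x ! p \<le> bb v z ! p"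
          using U0[OF vA] vA by (intro bexI[of _ v]) auto
      qed
      show ?thesis using core[OF sg vA v0 dv la lb z_def] e unfolding S_def[symmetric] M_def[symmetric]
        by simp
    qed
    have "((\<forall>i\<in>S. lo v i z \<le> hi v i z) \<and> (\<forall>p<M. aa v z ! p \<le> 0 \<and> 0 \<le> bb v z ! p)) \<longleftrightarrow>
       (\<forall>i\<in>S. \<forall>j\<in>S. lo v i z \<le> hi v j z) \<and> (\<forall>k\<in>set (Kl v). a ! k \<le> 0 \<and> 0 \<le> b ! k)"
    proof
      assume h: "(\<forall>i\<in>S. lo v i z \<le> hi v i z) \<and> (\<forall>p<M. aa v z ! p \<le> 0 \<and> 0 \<le> bb v z ! p)"
      have 1: "\<forall>i\<in>S. \<forall>j\<in>S. lo v i z \<le> hi v j z"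
      proof (intro ballI)
        fix i j assume ij: "i \<in> S" "j \<in> S"
        consider "i = j" | "i < j" | "j < i" by linarith
        then show "lo v i z \<le> hi v j z"
        proof cases
          case 1 then show ?thesis using h ij by simp
        next
          case 2
          then have "(i, j) \<in> set (Pl v)" using ij Sd lv by (simp add: set_Pl)
          then obtain p where p: "p < length (Pl v)" "Pl v ! p = (i, j)" by (metis in_set_conv_nth)
          then have "aa v z ! p \<le> 0" using h unfolding M_def by simp
          then show ?thesis using p by (simp add: aa_nth1)
        next
          case 3
          then have "(j, i) \<in> set (Pl v)" using ij Sd lv by (simp add: set_Pl)
          then obtain p where p: "p < length (Pl v)" "Pl v ! p = (j, i)" by (metis in_set_conv_nth)
          then have "0 \<le> bb v z ! p" using h unfolding M_def by simp
          then show ?thesis using p by (simp add: bb_nth1)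
        qed
      qed
      have 2: "\<forall>k\<in>set (Kl v). a ! k \<le> 0 \<and> 0 \<le> b ! k"
      proof
        fix k assume k: "k \<in> set (Kl v)"
        then obtain q where q: "q < length (Kl v)" "Kl v ! q = k" by (metis in_set_conv_nth)
        have "aa v z ! (length (Pl v) + q) \<le> 0 \<and> 0 \<le> bb v z ! (length (Pl v) + q)"
          using h q unfolding M_def by simp
        then show "a ! k \<le> 0 \<and> 0 \<le> b ! k" using q zi[of k] k Kd by (simp add: aa_nth2 bb_nth2)
      qed
      show "(\<forall>i\<in>S. \<forall>j\<in>S. lo v i z \<le> hi v j z) \<and> (\<forall>k\<in>set (Kl v). a ! k \<le> 0 \<and> 0 \<le> b ! k)"
        using 1 2 by blast
    next
      assume h: "(\<forall>i\<in>S. \<forall>j\<in>S. lo v i z \<le> hi v j z) \<and> (\<forall>k\<in>set (Kl v). a ! k \<le> 0 \<and> 0 \<le> b ! k)"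
      have "\<forall>p<M. aa v z ! p \<le> 0 \<and> 0 \<le> bb v z ! p"
      proof (intro allI impI)
        fix p assume p: "p < M"
        show "aa v z ! p \<le> 0 \<and> 0 \<le> bb v z ! p"
        proof (cases "p < length (Pl v)")
          case True
          obtain i j where ij: "Pl v ! p = (i, j)" by (cases "Pl v ! p")
          have "(i, j) \<in> set (Pl v)" using True ij by (metis nth_mem)
          then have "i \<in> S" "j \<in> S" using lv Sd by (auto simp: set_Pl)
          then show ?thesis using h True ij by (simp add: aa_nth1 bb_nth1)
        next
          case False
          define k where "k = Kl v ! (p - length (Pl v))"
          have k: "k \<in> set (Kl v)" using False p unfolding k_def M_def by simp
          then have "k < n" using Kd by simp
          then show ?thesis using h k False p zi[of k] unfolding M_def
            by (simp add: aa_nth2 bb_nth2 k_def[symmetric])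
        qed
      qed
      then show "(\<forall>i\<in>S. lo v i z \<le> hi v i z) \<and> (\<forall>p<M. aa v z ! p \<le> 0 \<and> 0 \<le> bb v z ! p)"
        using h by blast
    qed
    then show "(\<exists>x\<in>A. \<forall>i<n. a ! i \<le> x ! i \<and> x ! i \<le> b ! i) \<longleftrightarrow> (\<forall>l\<in>E. 0 \<le> l (interleave a b))"
      using core' RHS z_def by simp
  qed
  show ?thesis using fin ord box by blast
qed




lemma step_case:
  assumes sg: "int_subgroup n A" and vA: "v \<in> A" and v0: "v \<noteq> zerovec n"
    and dv: "\<forall>w\<in>A. vdvd v w" and UA: "U v ` A = B" and sgB: "int_subgroup m B"
    and dB: "1 \<le> dB" and finB: "finite EB" and ordB: "\<forall>l\<in>EB. modlin (2*m) dB l"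
    and boxB: "boxp m B EB"
  shows "\<exists>E. finite E \<and> (\<forall>l\<in>E. modlin (2*n) (Suc dB) l) \<and> boxp n A E"
proof -
  have lenA: "\<And>x. x \<in> A \<Longrightarrow> length x = n" using sg unfolding int_subgroup_def by auto
  have lv: "length v = n" using lenA vA by simp
  define S where "S = set (supp_list v)"
  have Sd: "S = {i. i < n \<and> v ! i \<noteq> 0}" using lv by (simp add: S_def set_supp)
  have Kd: "set (Kl v) = {k. k < n \<and> v ! k = 0}" using lv by (simp add: set_Kl)
  define M where "M = length (Pl v) + length (Kl v)"
  have "U v v \<in> B" using vA UA by blast
  then have Mm: "M = m" using length_U[of v v] sgB unfolding M_def int_subgroup_def by auto
  obtain k' where k': "dB = Suc k'" using dB by (cases dB) auto
  define E1 where "E1 = (\<lambda>i. \<lambda>z. hi v i z - lo v i z) ` S"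
  define E2 where "E2 = (\<lambda>l. \<lambda>z. l (sub v z)) ` EB"
  define E where "E = E1 \<union> E2"
  have fin: "finite E" unfolding E_def E1_def E2_def S_def using finB by simp
  have ord: "\<forall>l\<in>E. modlin (2*n) (Suc dB) l"
  proof
    fix l assume "l \<in> E"
    then consider "l \<in> E1" | "l \<in> E2" unfolding E_def by blast
    then show "modlin (2*n) (Suc dB) l"
    proof cases
      case 1
      then obtain i where "i \<in> S" "l = (\<lambda>z. hi v i z - lo v i z)" unfolding E1_def by auto
      then have "modlin (2*n) (Suc 0) l" using hilo_vmodlin[of i n i v] Sd by auto
      then show ?thesis by (rule modlin_lift) simp
    next
      case 2
      then obtain l' where l': "l' \<in> EB" "l = (\<lambda>z. l' (sub v z))" unfolding E2_def by auto
      have "modlin (2 * (length (Pl v) + length (Kl v))) (Suc k') l'"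
        using ordB l'(1) k' Mm unfolding M_def by simp
      from comp_suc[OF lv this] show ?thesis using l'(2) k' by simp
    qed
  qed
  have box: "boxp n A E"
    unfolding boxp_def
  proof (intro allI impI)
    fix a b :: "int list"
    assume la: "length a = n" and lb: "length b = n" and ab: "\<forall>i<n. a ! i \<le> b ! i"
    define z where "z = interleave a b"
    have zi: "\<And>i. i < n \<Longrightarrow> z ! (2*i) = a ! i \<and> z ! (2*i+1) = b ! i"
      using interleave_nth[of a b] la lb z_def by simp
    have RHS: "(\<forall>l\<in>E. 0 \<le> l z) \<longleftrightarrow>
       (\<forall>i\<in>S. lo v i z \<le> hi v i z) \<and> (\<forall>l\<in>EB. 0 \<le> l (sub v z))"
    proof -
      have "(\<forall>l\<in>E1. 0 \<le> l z) \<longleftrightarrow> (\<forall>i\<in>S. lo v i z \<le> hi v i z)" unfolding E1_def by simp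
      moreover have "(\<forall>l\<in>E2. 0 \<le> l z) \<longleftrightarrow> (\<forall>l\<in>EB. 0 \<le> l (sub v z))" unfolding E2_def by simp
      ultimately show ?thesis unfolding E_def by blast
    qed
    have ex: "(\<exists>x\<in>A. \<forall>p<M. aa v z ! p \<le> U v x ! p \<and> U v x ! p \<le> bb v z ! p) \<longleftrightarrow>
        (\<exists>u\<in>B. \<forall>p<m. aa v z ! p \<le> u ! p \<and> u ! p \<le> bb v z ! p)"
      using UA Mm by blast
    have core': "(\<exists>x\<in>A. \<forall>i<n. a!i \<le> x!i \<and> x!i \<le> b!i) \<longleftrightarrow>
     ((\<forall>i\<in>S. lo v i z \<le> hi v i z) \<and> (\<exists>u\<in>B. \<forall>p<m. aa v z ! p \<le> u ! p \<and> u ! p \<le> bb v z ! p))"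
      using core[OF sg vA v0 dv la lb z_def] ex unfolding S_def[symmetric] M_def[symmetric]
      by simp
    show "(\<exists>x\<in>A. \<forall>i<n. a ! i \<le> x ! i \<and> x ! i \<le> b ! i) \<longleftrightarrow> (\<forall>l\<in>E. 0 \<le> l (interleave a b))"
    proof (cases "\<forall>i\<in>S. lo v i z \<le> hi v i z")
      case False
      then show ?thesis using core' RHS z_def by blast
    next
      case diag: True
      have abm: "\<forall>p<m. aa v z ! p \<le> bb v z ! p"
      proof (intro allI impI)
        fix p assume p: "p < m"
        show "aa v z ! p \<le> bb v z ! p"
        proof (cases "p < length (Pl v)")
          case True
          obtain i j where ij: "Pl v ! p = (i, j)" by (cases "Pl v ! p")
          have "(i, j) \<in> set (Pl v)" using True ij by (metis nth_mem)
          then have "i \<in> S" "j \<in> S" using lv Sd by (auto simp: set_Pl)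
          then have "lo v i z \<le> hi v i z" "lo v j z \<le> hi v j z" using diag by auto
          then show ?thesis using True ij by (simp add: aa_nth1 bb_nth1)
        next
          case False
          define k where "k = Kl v ! (p - length (Pl v))"
          have k: "k \<in> set (Kl v)" using False p Mm unfolding k_def M_def by simp
          then have "k < n" using Kd by simp
          then show ?thesis using ab k False p Mm zi[of k] unfolding M_def
            by (simp add: aa_nth2 bb_nth2 k_def[symmetric])
        qed
      qed
      have "length (aa v z) = m" "length (bb v z) = m" using Mm unfolding M_def
        by (simp_all add: length_aa length_bb)
      then have "(\<exists>u\<in>B. \<forall>p<m. aa v z ! p \<le> u ! p \<and> u ! p \<le> bb v z ! p) \<longleftrightarrow>
          (\<forall>l\<in>EB. 0 \<le> l (sub v z))"
        using boxB abm unfolding boxp_def sub_def by blast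
      then show ?thesis using core' RHS z_def diag by blast
    qed
  qed
  show ?thesis using fin ord box by blast
qed




lemma indep_take:
  assumes "lin_indep_Z n vs" "j \<le> length vs"
  shows "lin_indep_Z n (take j vs)"
  unfolding lin_indep_Z_def
proof (rule allI, rule impI)
  fix c :: "nat \<Rightarrow> int"
  assume H: "\<forall>k<n. (\<Sum>i<length (take j vs). c i * take j vs ! i ! k) = 0"
  define c' where "c' = (\<lambda>i. if i < j then c i else 0)"
  have "\<forall>k<n. (\<Sum>i<length vs. c' i * vs ! i ! k) = 0"
  proof (intro allI impI)
    fix k assume k: "k < n"
    have "(\<Sum>i<length vs. c' i * vs ! i ! k) = (\<Sum>i<j. c' i * vs ! i ! k)"
      by (rule sum.mono_neutral_right) (use assms(2) in \<open>auto simp: c'_def\<close>)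
    also have "(\<Sum>i<j. c' i * vs ! i ! k) = (\<Sum>i<length (take j vs). c i * take j vs ! i ! k)"
      using assms(2) unfolding c'_def by (intro sum.cong) auto
    finally show "(\<Sum>i<length vs. c' i * vs ! i ! k) = 0" using H k by simp
  qed
  then have "\<forall>i<length vs. c' i = 0" using assms(1) unfolding lin_indep_Z_def by blast
  then have z: "\<And>i. i < length vs \<Longrightarrow> c' i = 0" by blast
  show "\<forall>i<length (take j vs). c i = 0"
  proof (intro allI impI)
    fix i assume "i < length (take j vs)"
    then have i: "i < j" "i < length vs" by auto
    then have "c' i = 0" using z by blast
    then show "c i = 0" using i(1) unfolding c'_def by simp
  qed
qed

lemma main:
  "inE n A \<Longrightarrow> \<exists>d. 1 \<le> d \<and> (\<exists>vs. length vs = d \<and> set vs \<subseteq> A \<and> lin_indep_Z n vs) \<and>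
     (\<exists>E. finite E \<and> (\<forall>l\<in>E. modlin (2*n) d l) \<and> boxp n A E)"
proof (induction rule: inE.induct)
  case (1 n A v s m)
  have sg: "int_subgroup n A" and vA: "v \<in> A" and v0: "v \<noteq> zerovec n" and dv: "\<forall>w\<in>A. vdvd v w"
    using 1 by auto
  have lenA: "\<And>x. x \<in> A \<Longrightarrow> length x = n" using sg unfolding int_subgroup_def by auto
  have lv: "length v = n" using lenA vA by simp
  have UL: "Lv v ` (map rat_of_int ` A) = map rat_of_int ` (U v ` A)"
  proof -
    have "Lv v ` (map rat_of_int ` A) = (\<lambda>x. Lv v (map rat_of_int x)) ` A" by (simp add: image_image)
    also have "\<dots> = (\<lambda>x. map rat_of_int (U v x)) ` A"
      using Lv_U lenA lv dv by (intro image_cong) auto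
    also have "\<dots> = map rat_of_int ` (U v ` A)" by (simp add: image_image)
    finally show ?thesis .
  qed
  have inj: "inj (map rat_of_int)" by (intro inj_mapI) (simp add: inj_on_def)
  have Mv: "U v v \<in> U v ` A" using vA by blast
  from 1 consider (b) "Lv v ` map rat_of_int ` A = {zerovec m}"
    | (s) B where "inE m B" "\<exists>d. 1 \<le> d \<and> (\<exists>vs. length vs = d \<and> set vs \<subseteq> B \<and> lin_indep_Z m vs) \<and>
     (\<exists>E. finite E \<and> (\<forall>l\<in>E. modlin (2*m) d l) \<and> boxp m B E)"
      "Lv v ` map rat_of_int ` A = map rat_of_int ` B" by blast
  then show ?case
  proof cases
    case b
    have "map rat_of_int ` (U v ` A) = map rat_of_int ` {zerovec m}"
      using b UL by (simp add: zerovec_def)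
    then have UA: "U v ` A = {zerovec m}" by (simp only: inj_image_eq_iff[OF inj])
    obtain E where E: "finite E" "\<forall>l\<in>E. modlin (2*n) (Suc 0) l" "boxp n A E"
      using base_case[OF sg vA v0 dv UA] by blast
    have "lin_indep_Z (length (Pl v) + length (Kl v)) (map (U v) [])"
      by (simp add: lin_indep_Z_def)
    then have "lin_indep_Z n [v]" using indep[OF sg vA v0 dv, of "[]"] by simp
    moreover have "length [v] = Suc 0 \<and> set [v] \<subseteq> A" using vA by simp
    moreover have "(1::nat) \<le> Suc 0" by simp
    ultimately show ?thesis using E by blast
  next
    case s
    have "map rat_of_int ` (U v ` A) = map rat_of_int ` B" using s(3) UL by simp
    then have UA: "U v ` A = B" by (simp only: inj_image_eq_iff[OF inj])
    have sgB: "int_subgroup m B" using s(1) by (cases rule: inE.cases) auto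
    obtain dB us EB where h: "1 \<le> dB" "length us = dB" "set us \<subseteq> B" "lin_indep_Z m us"
      "finite EB" "\<forall>l\<in>EB. modlin (2*m) dB l" "boxp m B EB" using s(2) by blast
    have Mm: "length (Pl v) + length (Kl v) = m"
      using Mv UA sgB length_U[of v v] unfolding int_subgroup_def by auto
    define ws where "ws = map (\<lambda>u. SOME x. x \<in> A \<and> U v x = u) us"
    have pre: "\<And>u. u \<in> set us \<Longrightarrow> (SOME x. x \<in> A \<and> U v x = u) \<in> A \<and> U v (SOME x. x \<in> A \<and> U v x = u) = u"
    proof -
      fix u assume "u \<in> set us"
      then have "\<exists>x. x \<in> A \<and> U v x = u" using h(3) UA by auto
      then show "?thesis u" by (rule someI_ex)
    qed
    have wsA: "set ws \<subseteq> A" using pre unfolding ws_def by auto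
    have "map (U v) ws = us" unfolding ws_def using pre by (induction us) auto
    then have "lin_indep_Z n (v # ws)" using indep[OF sg vA v0 dv wsA] h(4) Mm by simp
    moreover have "length (v # ws) = Suc dB" using h(2) by (simp add: ws_def)
    moreover have "set (v # ws) \<subseteq> A" using wsA vA by simp
    moreover obtain E where "finite E" "\<forall>l\<in>E. modlin (2*n) (Suc dB) l" "boxp n A E"
      using step_case[OF sg vA v0 dv UA sgB h(1) h(5) h(6) h(7)] by blast
    moreover have "(1::nat) \<le> Suc dB" by simp
    ultimately show ?thesis by blast
  qed
qed




theorem mainTheorem1:
  fixes n r :: nat and A :: "int list set"
  assumes "n \<ge> 1" and "inE n A" and "has_rank n A r"
  shows "\<exists>E. finite E \<and> (\<forall>l\<in>E. modlin (2 * n) r l) \<and>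
    (\<forall>a b. length a = n \<longrightarrow> length b = n \<longrightarrow> (\<forall>i<n. a ! i \<le> b ! i) \<longrightarrow>
       ((\<exists>x\<in>A. \<forall>i<n. a ! i \<le> x ! i \<and> x ! i \<le> b ! i) \<longleftrightarrow>
        (\<forall>l\<in>E. 0 \<le> l (interleave a b))))"
proof -
  obtain d where hd: "1 \<le> d \<and> (\<exists>vs. length vs = d \<and> set vs \<subseteq> A \<and> lin_indep_Z n vs) \<and>
     (\<exists>E. finite E \<and> (\<forall>l\<in>E. modlin (2*n) d l) \<and> boxp n A E)"
    using main[OF assms(2)] by (elim exE) (rule that)
  then obtain vs where hv: "length vs = d" "set vs \<subseteq> A" "lin_indep_Z n vs" by (elim conjE exE)
  obtain E where hE: "finite E" "\<forall>l\<in>E. modlin (2*n) d l" "boxp n A E" using hd by (elim conjE exE)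
  have d1: "1 \<le> d" using hd by (elim conjE)
  have "d \<le> r"
  proof (rule ccontr)
    assume "\<not> d \<le> r"
    then have sr: "Suc r \<le> length vs" using hv(1) by simp
    have l1: "length (take (Suc r) vs) = Suc r" using sr by simp
    have l2: "set (take (Suc r) vs) \<subseteq> A" using hv(2) set_take_subset[of "Suc r" vs] by (rule order_trans[rotated])
    have l3: "lin_indep_Z n (take (Suc r) vs)" by (rule indep_take[OF hv(3) sr])
    have "\<not> (\<exists>vs. length vs = Suc r \<and> set vs \<subseteq> A \<and> lin_indep_Z n vs)"
      using assms(3) unfolding has_rank_def by (elim conjE)
    then show False using l1 l2 l3 by blast
  qed
  obtain d' where d': "d = Suc d'" using d1 by (cases d) auto
  obtain r' where r': "r = Suc r'" using d1 \<open>d \<le> r\<close> by (cases r) auto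
  have dr: "d' \<le> r'" using d' r' \<open>d \<le> r\<close> by simp
  have ord: "\<forall>l\<in>E. modlin (2 * n) r l"
  proof
    fix l assume "l \<in> E"
    then have "modlin (2*n) (Suc d') l" using hE(2) d' by simp
    from modlin_lift[OF this dr] show "modlin (2 * n) r l" using r' by simp
  qed
  show ?thesis
  proof (intro exI[of _ E] conjI)
    show "finite E" by (rule hE(1))
    show "\<forall>l\<in>E. modlin (2 * n) r l" by (rule ord)
    show "\<forall>a b. length a = n \<longrightarrow> length b = n \<longrightarrow> (\<forall>i<n. a ! i \<le> b ! i) \<longrightarrow>
       ((\<exists>x\<in>A. \<forall>i<n. a ! i \<le> x ! i \<and> x ! i \<le> b ! i) \<longleftrightarrow>
        (\<forall>l\<in>E. 0 \<le> l (interleave a b)))" using hE(3) unfolding boxp_def .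
  qed
qed


end
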